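(* Let $H=(v_1,\dots,v_6)$ be an embedded equilateral hexagon, considered up to translations and rotations, whose action-angle coordinates $(d_1,d_2,d_3,\theta_1,\theta_2,\theta_3)$ for the $T_{135}$ triangulation are defined. If $J(H)=(1,1)$, then $\theta_i\in(0,\pi)$ for all $i\in\{1,2,3\}$, and $\theta_1+\theta_2<\pi$, $\theta_1+\theta_3<\pi$, $\theta_2+\theta_3<\pi$.
   Context: An equilateral hexagon is an ordered 6-tuple $H=(v_1,\dots,v_6)$ in $\mathbb{R}^3$ with $\|v_i-v_{i+1}\|=1$ (indices mod 6), edges $e_i=[v_i,v_{i+1}]$, oriented $v_1\to v_2\to\cdots\to v_6\to v_1$; embedded means non-adjacent edges are disjoint and adjacent ones meet only at their common endpoint. Standard position: $v_1=0$, $v_3$ on the positive $x$-axis, $v_5$ in the $xy$-plane with positive $y$-coordinate. Action-angle coordinates ($T_{135}$ triangulation), defined when $v_1,v_3,v_5$ are not collinear and $0<d_i<2$: $d_1=\|v_3-v_1\|$, $d_2=\|v_5-v_3\|$, $d_3=\|v_1-v_5\|$; with $m_1,m_2,m_3$ the midpoints of $[v_1,v_3],[v_3,v_5],[v_5,v_1]$, $u_1,u_2,u_3$ the unit vectors in the $xy$-plane perpendicular to these segments pointing toward the opposite vertex of triangle $v_1v_3v_5$ (toward $v_5,v_1,v_3$ respectively), and $e_z=(0,0,1)$, the angles $\theta_i\in[0,2\pi)$ are determined by $v_{2i}=m_i+\tfrac12\sqrt{4-d_i^2}(\cos\theta_i\,u_i+\sin\theta_i\,e_z)$ (regular planar hexagon: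 all $\theta_i=\pi$). Joint Chirality-Curl: $curl(H)=\operatorname{sign}\big((v_3-v_1)\times(v_5-v_1)\cdot(v_2-v_1)\big)$. For $i=2,4,6$, $T_i$ is the open triangular disk with vertices $v_{i-1},v_i,v_{i+1}$, oriented by the right-hand rule (normal $(v_i-v_{i-1})\times(v_{i+1}-v_i)$), and $\Delta_i$ is the algebraic intersection number of $T_i$ with the oriented polygon $H$. Then $J(H)=(\Delta_2\Delta_4\Delta_6,\ \Delta_2^2\Delta_4^2\Delta_6^2\,curl(H))$. *)

theory Defs
  imports "HOL-Analysis.Analysis" "HOL-Analysis.Cross3"
begin

text \<open>A hexagon is a map v :: nat => real^3; only v 1, ..., v 6 matter.
  hv v i is the vertex with cyclic index i (indices taken mod 6, in 1..6).\<close>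

definition hv :: "(nat \<Rightarrow> real^3) \<Rightarrow> nat \<Rightarrow> real^3" where
  "hv v i = v (((i + 5) mod 6) + 1)"

definition hedge :: "(nat \<Rightarrow> real^3) \<Rightarrow> nat \<Rightarrow> (real^3) set" where
  "hedge v i = closed_segment (hv v i) (hv v (i + 1))"

definition equilateral_hexagon :: "(nat \<Rightarrow> real^3) \<Rightarrow> bool" where
  "equilateral_hexagon v \<longleftrightarrow> (\<forall>i\<in>{1..6}. dist (hv v i) (hv v (i + 1)) = 1)"

definition embedded_hexagon :: "(nat \<Rightarrow> real^3) \<Rightarrow> bool" where
  "embedded_hexagon v \<longleftrightarrow>
     (\<forall>i\<in>{1..6}. \<forall>j\<in>{1..6}. i \<noteq> j \<longrightarrow>
        (if j = i mod 6 + 1 then hedge v i \<inter> hedge v j = {hv v j}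
         else if i = j mod 6 + 1 then hedge v i \<inter> hedge v j = {hv v i}
         else hedge v i \<inter> hedge v j = {}))"

definition is_rotation3 :: "real^3^3 \<Rightarrow> bool" where
  "is_rotation3 R \<longleftrightarrow> orthogonal_matrix R \<and> det R = 1"

definition standard_position :: "(nat \<Rightarrow> real^3) \<Rightarrow> bool" where
  "standard_position v \<longleftrightarrow>
     hv v 1 = 0 \<and>
     (hv v 3) $ 1 > 0 \<and> (hv v 3) $ 2 = 0 \<and> (hv v 3) $ 3 = 0 \<and>
     (hv v 5) $ 3 = 0 \<and> (hv v 5) $ 2 > 0"

definition aa_d :: "(nat \<Rightarrow> real^3) \<Rightarrow> nat \<Rightarrow> real" where
  "aa_d v i = dist (hv v (2 * i - 1)) (hv v (2 * i + 1))"

definition aa_defined :: "(nat \<Rightarrow> real^3) \<Rightarrow> bool" where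
  "aa_defined v \<longleftrightarrow> \<not> collinear {hv v 1, hv v 3, hv v 5} \<and>
     (\<forall>i\<in>{1,2,3}. 0 < aa_d v i \<and> aa_d v i < 2)"

definition aa_m :: "(nat \<Rightarrow> real^3) \<Rightarrow> nat \<Rightarrow> real^3" where
  "aa_m v i = midpoint (hv v (2 * i - 1)) (hv v (2 * i + 1))"

definition aa_u :: "(nat \<Rightarrow> real^3) \<Rightarrow> nat \<Rightarrow> real^3" where
  "aa_u v i = (let w = hv v (2 * i + 1) - hv v (2 * i - 1);
                   c = (1 / norm w) *\<^sub>R vector [- (w $ 2), w $ 1, 0]
               in if c \<bullet> (hv v (2 * i + 3) - aa_m v i) > 0 then c else - c)"

definition e_z :: "real^3" where
  "e_z = vector [0, 0, 1]"

definition aa_theta :: "(nat \<Rightarrow> real^3) \<Rightarrow> nat \<Rightarrow> real" where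
  "aa_theta v i = (THE \<theta>. 0 \<le> \<theta> \<and> \<theta> < 2 * pi \<and>
      hv v (2 * i) = aa_m v i + (sqrt (4 - (aa_d v i)\<^sup>2) / 2) *\<^sub>R
                        (cos \<theta> *\<^sub>R aa_u v i + sin \<theta> *\<^sub>R e_z))"

definition curl :: "(nat \<Rightarrow> real^3) \<Rightarrow> real" where
  "curl v = sgn ((cross3 (hv v 3 - hv v 1) (hv v 5 - hv v 1)) \<bullet> (hv v 2 - hv v 1))"

definition open_triangle :: "real^3 \<Rightarrow> real^3 \<Rightarrow> real^3 \<Rightarrow> (real^3) set" where
  "open_triangle p q r = {a *\<^sub>R p + b *\<^sub>R q + c *\<^sub>R r | a b c.
       0 < a \<and> 0 < b \<and> 0 < c \<and> a + b + c = 1}"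

text \<open>Signed contribution of the oriented segment a -> b crossing the open triangle
  T = open_triangle p q r (normal (q - p) x (r - q)).  Segments parallel to the
  plane of T contribute 0; a transverse crossing at an interior point of the
  segment contributes the sign of (b - a) . normal; a crossing at an endpoint of the
  segment (a vertex of the polygon lying in T) contributes half that sign, so that
  the two edges at such a vertex together contribute the correct local index.\<close>
definition cross_contrib :: "real^3 \<Rightarrow> real^3 \<Rightarrow> real^3 \<Rightarrow> real^3 \<Rightarrow> real^3 \<Rightarrow> real" where
  "cross_contrib p q r a b =
     (let n = cross3 (q - p) (r - q); d = (b - a) \<bullet> n in
      if d = 0 then 0 else
      (let s = ((p - a) \<bullet> n) / d; x = a + s *\<^sub>R (b - a) in
       if x \<in> open_triangle p q r then
         (if 0 < s \<and> s < 1 then sgn d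
          else if s = 0 \<or> s = 1 then sgn d / 2 else 0)
       else 0))"

text \<open>Delta_i: algebraic intersection number of T_i (vertices v_(i-1), v_i, v_(i+1))
  with the oriented polygon.\<close>
definition Delta :: "(nat \<Rightarrow> real^3) \<Rightarrow> nat \<Rightarrow> real" where
  "Delta v i = (\<Sum>j = 1..6. cross_contrib (hv v (i + 5)) (hv v i) (hv v (i + 1))
                                           (hv v j) (hv v (j + 1)))"

definition JCC :: "(nat \<Rightarrow> real^3) \<Rightarrow> real \<times> real" where
  "JCC v = (Delta v 2 * Delta v 4 * Delta v 6,
            (Delta v 2)\<^sup>2 * (Delta v 4)\<^sup>2 * (Delta v 6)\<^sup>2 * curl v)"

end

theory Submission
  imports Defs
begin

lemma rot_ot: "is_rotation3 R \<Longrightarrow> orthogonal_transformation (\<lambda>x. R *v x)"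
  by (simp add: is_rotation3_def orthogonal_transformation_matrix)

lemma rot_inner: "is_rotation3 R \<Longrightarrow> (R *v x) \<bullet> (R *v y) = x \<bullet> y"
  using rot_ot unfolding orthogonal_transformation_def by blast

lemma rot_cross: "is_rotation3 R \<Longrightarrow> cross3 (R *v x) (R *v y) = R *v (cross3 x y)"
  by (simp add: cross_rotation_matrix is_rotation3_def rotation_matrix_def)

lemma rot_inj: "is_rotation3 R \<Longrightarrow> R *v x = R *v y \<Longrightarrow> x = y"
  using rot_ot orthogonal_transformation_inj unfolding inj_def by blast

lemma open_tri_inv:
  assumes "is_rotation3 R"
  shows "(R *v x + t \<in> open_triangle (R *v p + t) (R *v q + t) (R *v r + t)) = (x \<in> open_triangle p q r)"
proof
  assume "R *v x + t \<in> open_triangle (R *v p + t) (R *v q + t) (R *v r + t)"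
  then obtain a b c where abc: "0 < a" "0 < b" "0 < c" "a + b + c = 1"
    and e: "R *v x + t = a *\<^sub>R (R *v p + t) + b *\<^sub>R (R *v q + t) + c *\<^sub>R (R *v r + t)"
    unfolding open_triangle_def by blast
  have "a *\<^sub>R (R *v p + t) + b *\<^sub>R (R *v q + t) + c *\<^sub>R (R *v r + t)
      = R *v (a *\<^sub>R p + b *\<^sub>R q + c *\<^sub>R r) + (a + b + c) *\<^sub>R t"
    by (simp add: matrix_vector_right_distrib matrix_vector_mult_scaleR algebra_simps)
  with e abc have "R *v x = R *v (a *\<^sub>R p + b *\<^sub>R q + c *\<^sub>R r)" by simp
  then have "x = a *\<^sub>R p + b *\<^sub>R q + c *\<^sub>R r" using rot_inj[OF assms] by blast
  then show "x \<in> open_triangle p q r" unfolding open_triangle_def using abc by blast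
next
  assume "x \<in> open_triangle p q r"
  then obtain a b c where abc: "0 < a" "0 < b" "0 < c" "a + b + c = 1"
    and e: "x = a *\<^sub>R p + b *\<^sub>R q + c *\<^sub>R r"
    unfolding open_triangle_def by blast
  have "a *\<^sub>R (R *v p + t) + b *\<^sub>R (R *v q + t) + c *\<^sub>R (R *v r + t)
      = R *v (a *\<^sub>R p + b *\<^sub>R q + c *\<^sub>R r) + (a + b + c) *\<^sub>R t"
    by (simp add: matrix_vector_right_distrib matrix_vector_mult_scaleR algebra_simps)
  with e abc have "R *v x + t = a *\<^sub>R (R *v p + t) + b *\<^sub>R (R *v q + t) + c *\<^sub>R (R *v r + t)" by simp
  then show "R *v x + t \<in> open_triangle (R *v p + t) (R *v q + t) (R *v r + t)"
    unfolding open_triangle_def using abc by blast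
qed

lemma cc_inv:
  assumes R: "is_rotation3 R"
  shows "cross_contrib (R *v p + t) (R *v q + t) (R *v r + t) (R *v a + t) (R *v b + t)
         = cross_contrib p q r a b"
proof -
  have dq: "\<And>x y. (R *v x + t) - (R *v y + t) = R *v (x - y)"
    by (simp add: matrix_vector_mult_diff_distrib)
  have n: "cross3 ((R *v q + t) - (R *v p + t)) ((R *v r + t) - (R *v q + t)) = R *v cross3 (q - p) (r - q)"
    by (simp only: dq rot_cross[OF R])
  have x: "\<And>s. (R *v a + t) + s *\<^sub>R (R *v (b - a)) = R *v (a + s *\<^sub>R (b - a)) + t"
    by (simp add: matrix_vector_right_distrib matrix_vector_mult_scaleR algebra_simps)
  show ?thesis
    unfolding cross_contrib_def Let_def n
    by (simp only: dq rot_inner[OF R] x open_tri_inv[OF R])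
qed

lemma curl_inv:
  assumes R: "is_rotation3 R"
  shows "curl (\<lambda>j. R *v v j + t) = curl v"
proof -
  have dq: "\<And>x y. (R *v x + t) - (R *v y + t) = R *v (x - y)"
    by (simp add: matrix_vector_mult_diff_distrib)
  show ?thesis unfolding curl_def hv_def by (simp only: dq rot_cross[OF R] rot_inner[OF R])
qed

lemma Delta_inv:
  assumes R: "is_rotation3 R"
  shows "Delta (\<lambda>j. R *v v j + t) i = Delta v i"
  unfolding Delta_def hv_def using cc_inv[OF R] by simp

lemma JCC_inv:
  assumes R: "is_rotation3 R"
  shows "JCC (\<lambda>j. R *v v j + t) = JCC v"
  unfolding JCC_def using Delta_inv[OF R] curl_inv[OF R] by simp

lemma equi_inv:
  assumes R: "is_rotation3 R" and "equilateral_hexagon v"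
  shows "equilateral_hexagon (\<lambda>j. R *v v j + t)"
proof -
  have dq: "\<And>x y. (R *v x + t) - (R *v y + t) = R *v (x - y)"
    by (simp add: matrix_vector_mult_diff_distrib)
  have "\<And>x y. dist (R *v x + t) (R *v y + t) = dist x y"
    unfolding dist_norm dq using orthogonal_transformation_norm[OF rot_ot[OF R]] by simp
  then show ?thesis using assms(2) unfolding equilateral_hexagon_def hv_def by simp
qed

lemma pair_real:
  fixes a1 a2 c1 c2 na nc xb yb xa ya lb mb la ma :: real
  assumes na: "na > 0" "na\<^sup>2 = a1\<^sup>2 + a2\<^sup>2" and nc: "nc > 0" "nc\<^sup>2 = c1\<^sup>2 + c2\<^sup>2"
   and D: "a2*c1 - a1*c2 > 0"
   and pos: "lb > 0" "la > 0" "mb \<ge> 0" "ma \<ge> 0" "mb + ma > 0" "yb > 0" "ya > 0"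
   and ex: "lb*a1 + mb*xb*(a2/na) = la*c1 + ma*xa*(-c2/nc)"
   and ey: "lb*a2 + mb*xb*(-a1/na) = la*c2 + ma*xa*(c1/nc)"
   and ez: "mb*yb = ma*ya"
  shows "yb*xa + xb*ya > 0"
proof -
  define Xb where "Xb = mb*xb"
  define Xa where "Xa = ma*xa"
  define r where "r = a1*c1 + a2*c2"
  define D where "D = a2*c1 - a1*c2"
  have ex': "lb*a1*na*nc + Xb*a2*nc = la*c1*na*nc - Xa*c2*na"
    using ex na(1) nc(1) unfolding Xb_def Xa_def by (simp add: field_simps)
  have ey': "lb*a2*na*nc - Xb*a1*nc = la*c2*na*nc + Xa*c1*na"
    using ey na(1) nc(1) unfolding Xb_def Xa_def by (simp add: field_simps)
  have "a2*(lb*a1*na*nc + Xb*a2*nc) - a1*(lb*a2*na*nc - Xb*a1*nc) = a2*(la*c1*na*nc - Xa*c2*na) - a1*(la*c2*na*nc + Xa*c1*na)"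
    using ex' ey' by simp
  then have "Xb*(a1\<^sup>2 + a2\<^sup>2)*nc = la*D*na*nc - Xa*r*na"
    unfolding D_def r_def by (simp add: algebra_simps power2_eq_square)
  then have "Xb*na\<^sup>2*nc = la*D*na*nc - Xa*r*na" using na(2) by simp
  then have "na*(Xb*na*nc) = na*(la*D*nc - Xa*r)"
    by (simp add: algebra_simps power2_eq_square)
  then have E1: "Xb*na*nc = la*D*nc - Xa*r"
    using na(1) by simp
  have "c1*(lb*a2*na*nc - Xb*a1*nc) - c2*(lb*a1*na*nc + Xb*a2*nc) = c1*(la*c2*na*nc + Xa*c1*na) - c2*(la*c1*na*nc - Xa*c2*na)"
    using ex' ey' by simp
  then have "lb*D*na*nc - Xb*r*nc = Xa*(c1\<^sup>2 + c2\<^sup>2)*na"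
    unfolding D_def r_def by (simp add: algebra_simps power2_eq_square)
  then have "lb*D*na*nc - Xb*r*nc = Xa*nc\<^sup>2*na" using nc(2) by simp
  then have "nc*(lb*D*na - Xb*r) = nc*(Xa*na*nc)"
    by (simp add: algebra_simps power2_eq_square)
  then have E2: "lb*D*na - Xb*r = Xa*na*nc"
    using nc(1) by simp
  have sum: "(Xa + Xb)*(na*nc + r) = D*(la*nc + lb*na)"
    using E1 E2 by (simp add: algebra_simps)
  have "(na*nc)\<^sup>2 = r\<^sup>2 + D\<^sup>2"
    using na(2) nc(2) unfolding r_def D_def by (simp add: power_mult_distrib algebra_simps power2_eq_square)
  moreover have "D > 0" using assms(5) unfolding D_def .
  ultimately have "r\<^sup>2 < (na*nc)\<^sup>2" by (simp add: power2_eq_square)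
  then have "\<bar>r\<bar> < na*nc" using na(1) nc(1)
    by (metis abs_of_pos mult_pos_pos power2_abs power_less_imp_less_base zero_le_mult_iff less_imp_le abs_ge_zero)
  then have pr: "na*nc + r > 0" by linarith
  have "D*(la*nc + lb*na) > 0" using \<open>D > 0\<close> pos na(1) nc(1) by (simp add: add_pos_pos)
  with sum have "(Xa + Xb)*(na*nc + r) > 0" by simp
  with pr have XX: "Xa + Xb > 0" by (simp add: zero_less_mult_iff)
  have mb: "mb > 0"
  proof (rule ccontr)
    assume "\<not> mb > 0" then have "mb = 0" using pos by simp
    then have "ma*ya = 0" using ez by simp
    then have "ma = 0" using pos by simp
    then show False using \<open>mb = 0\<close> pos by simp
  qed
  have ma: "ma > 0"
  proof (rule ccontr)
    assume "\<not> ma > 0" then have "ma = 0" using pos by simp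
    then have "mb*yb = 0" using ez by simp
    then show False using mb pos by simp
  qed
  have Z: "mb*yb > 0" using mb pos by simp
  have "mb*ma*(yb*xa + xb*ya) = (mb*yb)*(Xa + Xb)"
    unfolding Xa_def Xb_def using ez by (simp add: algebra_simps)
  also have "\<dots> > 0" using Z XX by simp
  finally show ?thesis using mb ma by (smt (verit) mult_pos_pos zero_less_mult_iff)
qed

lemma norm3_sq: "(norm (x::real^3))\<^sup>2 = (x$1)\<^sup>2 + (x$2)\<^sup>2 + (x$3)\<^sup>2"
  unfolding power2_norm_eq_inner by (simp add: inner_vec_def sum_3 power2_eq_square)

lemma ez_comp [simp]: "e_z$1 = 0" "e_z$2 = 0" "e_z$3 = 1"
  by (simp_all add: e_z_def vector_3)

lemma pair_vec:
  fixes V Pb Pa Fb Fa X ub ua :: "real^3"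
  assumes z: "V$3 = 0" "Pb$3 = 0" "Pa$3 = 0"
  and D: "(Pb-V)$2*(Pa-V)$1 - (Pb-V)$1*(Pa-V)$2 > 0"
  and Fb: "Fb = midpoint Pb V + hb *\<^sub>R (cos tb *\<^sub>R ub + sin tb *\<^sub>R e_z)"
  and ub: "ub = (1/norm (V - Pb)) *\<^sub>R vector[-((V-Pb)$2), (V-Pb)$1, 0]"
  and Fa: "Fa = midpoint V Pa + ha *\<^sub>R (cos ta *\<^sub>R ua + sin ta *\<^sub>R e_z)"
  and ua: "ua = (1/norm (Pa - V)) *\<^sub>R vector[-((Pa-V)$2), (Pa-V)$1, 0]"
  and h: "hb > 0" "ha > 0" "sin tb > 0" "sin ta > 0"
  and X1: "X - V = p1 *\<^sub>R (Pb - V) + p2 *\<^sub>R (Fb - V)"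
  and X2: "X - V = q1 *\<^sub>R (Pa - V) + q2 *\<^sub>R (Fa - V)"
  and p: "p1 \<ge> 0" "p2 \<ge> 0" "q1 \<ge> 0" "q2 \<ge> 0" "p1 + p2 > 0" "q1 + q2 > 0" "p2 + q2 > 0"
  shows "sin tb * cos ta + cos tb * sin ta > 0"
proof -
  define a1 where "a1 = (Pb - V)$1"
  define a2 where "a2 = (Pb - V)$2"
  define c1 where "c1 = (Pa - V)$1"
  define c2 where "c2 = (Pa - V)$2"
  define na where "na = norm (V - Pb)"
  define nc where "nc = norm (Pa - V)"
  have "na\<^sup>2 = a1\<^sup>2 + a2\<^sup>2" unfolding na_def a1_def a2_def norm3_sq using z
    by (simp add: power2_eq_square algebra_simps)
  moreover have "nc\<^sup>2 = c1\<^sup>2 + c2\<^sup>2" unfolding nc_def c1_def c2_def norm3_sq using z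
    by (simp add: power2_eq_square algebra_simps)
  moreover have "na > 0"
  proof -
    have "V \<noteq> Pb" using D by auto
    then show ?thesis unfolding na_def by simp
  qed
  moreover have "nc > 0"
  proof -
    have "V \<noteq> Pa" using D by auto
    then show ?thesis unfolding nc_def by simp
  qed
  moreover have "a2*c1 - a1*c2 > 0" using D unfolding a1_def a2_def c1_def c2_def .
  moreover have "p1 + p2/2 > 0" "q1 + q2/2 > 0" "p2*hb \<ge> 0" "q2*ha \<ge> 0"
    using p h by (auto simp: add_pos_nonneg add_nonneg_pos)
  moreover have "p2*hb + q2*ha > 0"
  proof (cases "p2 > 0")
    case True then show ?thesis using p h by (simp add: add_pos_nonneg)
  next
    case False then have "q2 > 0" using p by simp
    then show ?thesis using p h by (simp add: add_nonneg_pos)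
  qed
  moreover have "(p1 + p2/2)*a1 + (p2*hb)*cos tb*(a2/na) = (q1 + q2/2)*c1 + (q2*ha)*cos ta*(-c2/nc)"
  proof -
    have "(X - V)$1 = (X - V)$1" by simp
    then have "(p1 *\<^sub>R (Pb - V) + p2 *\<^sub>R (Fb - V))$1 = (q1 *\<^sub>R (Pa - V) + q2 *\<^sub>R (Fa - V))$1"
      using X1 X2 by metis
    then show ?thesis unfolding Fb Fa ub ua a1_def a2_def c1_def c2_def na_def nc_def
      by (simp add: midpoint_def vector_3 algebra_simps norm_minus_commute)
  qed
  moreover have "(p1 + p2/2)*a2 + (p2*hb)*cos tb*(-a1/na) = (q1 + q2/2)*c2 + (q2*ha)*cos ta*(c1/nc)"
  proof -
    have "(p1 *\<^sub>R (Pb - V) + p2 *\<^sub>R (Fb - V))$2 = (q1 *\<^sub>R (Pa - V) + q2 *\<^sub>R (Fa - V))$2"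
      using X1 X2 by metis
    then show ?thesis unfolding Fb Fa ub ua a1_def a2_def c1_def c2_def na_def nc_def
      by (simp add: midpoint_def vector_3 algebra_simps norm_minus_commute)
  qed
  moreover have "(p2*hb)* sin tb = (q2*ha)* sin ta"
  proof -
    have "(p1 *\<^sub>R (Pb - V) + p2 *\<^sub>R (Fb - V))$3 = (q1 *\<^sub>R (Pa - V) + q2 *\<^sub>R (Fa - V))$3"
      using X1 X2 by metis
    then show ?thesis unfolding Fb Fa ub ua using z
      by (simp add: midpoint_def vector_3 algebra_simps)
  qed
  ultimately show ?thesis using pair_real[of na a1 a2 nc c1 c2 "p1 + p2/2" "q1 + q2/2" "p2*hb" "q2*ha" "sin tb" "sin ta" "cos tb" "cos ta"] h
    by (simp add: mult.commute)
qed

lemma excl: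
  fixes P Q R F G X Y :: "real^3"
  assumes indep: "\<And>p q r f. p+q+r+f = 0 \<Longrightarrow> p *\<^sub>R P + q *\<^sub>R Q + r *\<^sub>R R + f *\<^sub>R F = 0 \<Longrightarrow> q = 0 \<and> f = 0"
  and X: "X = a *\<^sub>R P + b *\<^sub>R Q + c *\<^sub>R F" "a > 0" "b > 0" "c > 0" "a + b + c = 1"
  and X2: "X = (1-s) *\<^sub>R R + s *\<^sub>R G" "0 \<le> s" "s \<le> 1"
  and Y: "Y = (1-t) *\<^sub>R P + t *\<^sub>R F"
  and Y2: "Y = a' *\<^sub>R Q + b' *\<^sub>R R + c' *\<^sub>R G" "a' > 0" "b' > 0" "c' > 0" "a' + b' + c' = 1"
  shows False
proof -
  have s0: "s \<noteq> 0"
  proof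
    assume "s = 0"
    then have "a *\<^sub>R P + b *\<^sub>R Q + (-1) *\<^sub>R R + c *\<^sub>R F = 0" using X X2 by simp
    then have "c = 0" using indep[of a b "-1" c] X by simp
    then show False using X by simp
  qed
  define p where "p = c'*a - s*(1-t)"
  define q where "q = c'*b + s*a'"
  define r where "r = -c'*(1-s) + s*b'"
  define f where "f = c'*c - s*t"
  have sum: "p + q + r + f = 0" unfolding p_def q_def r_def f_def
  proof -
    have "c'*a - s*(1-t) + (c'*b + s*a') + (-c'*(1-s) + s*b') + (c'*c - s*t)
        = c'*(a+b+c) - c' + s*(a'+b'+c') - s" by (simp add: algebra_simps)
    then show "c'*a - s*(1-t) + (c'*b + s*a') + (-c'*(1-s) + s*b') + (c'*c - s*t) = 0"
      using X(5) Y2(5) by simp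
  qed
  have "p *\<^sub>R P + q *\<^sub>R Q + r *\<^sub>R R + f *\<^sub>R F
      = c' *\<^sub>R ((a *\<^sub>R P + b *\<^sub>R Q + c *\<^sub>R F) - (1-s) *\<^sub>R R)
        - s *\<^sub>R (((1-t) *\<^sub>R P + t *\<^sub>R F) - a' *\<^sub>R Q - b' *\<^sub>R R)"
    unfolding p_def q_def r_def f_def by (simp add: algebra_simps)
  also have "\<dots> = c' *\<^sub>R (s *\<^sub>R G) - s *\<^sub>R (c' *\<^sub>R G)"
  proof -
    have e1: "a *\<^sub>R P + b *\<^sub>R Q + c *\<^sub>R F = (1-s) *\<^sub>R R + s *\<^sub>R G" using X(1) X2(1) by simp
    have e2: "(1-t) *\<^sub>R P + t *\<^sub>R F = a' *\<^sub>R Q + b' *\<^sub>R R + c' *\<^sub>R G" using Y Y2(1) by simp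
    show ?thesis by (simp only: e1 e2) (simp add: algebra_simps)
  qed
  also have "\<dots> = 0" by simp
  finally have "q = 0" using indep sum by blast
  moreover have "q > 0" unfolding q_def using X Y2 X2 s0 by (simp add: add_pos_nonneg)
  ultimately show False by simp
qed

lemma sign_z:
  fixes P Q F R G X :: "real^3"
  assumes "X = a *\<^sub>R P + b *\<^sub>R F + c *\<^sub>R Q" "b > 0" "P$3 = 0" "Q$3 = 0" "F$3 > 0"
    and "X = (1-s) *\<^sub>R R + s *\<^sub>R G" "R$3 = 0" "0 \<le> s"
  shows "G$3 > 0"
proof -
  have "X$3 = b * F$3" using assms by simp
  moreover have "X$3 = s * G$3" using assms(6,7) by simp
  ultimately have "s * G$3 > 0" using assms(2,5) by (metis mult_pos_pos)
  then show ?thesis using assms(8) by (simp add: zero_less_mult_iff)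
qed

lemma vert_r:
  fixes p q r :: "real^3"
  assumes "cross3 (q-p) (r-q) \<noteq> 0"
  shows "r \<notin> open_triangle p q r"
proof
  assume "r \<in> open_triangle p q r"
  then obtain \<alpha> \<beta> \<gamma> where abc: "0 < \<alpha>" "0 < \<beta>" "0 < \<gamma>" "\<alpha> + \<beta> + \<gamma> = 1"
    and e: "r = \<alpha> *\<^sub>R p + \<beta> *\<^sub>R q + \<gamma> *\<^sub>R r"
    unfolding open_triangle_def by blast
  have g: "\<gamma> = 1 - \<alpha> - \<beta>" using abc by simp
  have "\<alpha> *\<^sub>R (q - p) = (\<alpha> + \<beta>) *\<^sub>R (q - r)"
  proof -
    have "0 = \<alpha> *\<^sub>R p + \<beta> *\<^sub>R q + \<gamma> *\<^sub>R r - r" using e by simp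
    also have "\<dots> = \<alpha> *\<^sub>R (p - r) + \<beta> *\<^sub>R (q - r)" unfolding g by (simp add: algebra_simps)
    finally have "\<alpha> *\<^sub>R (p - r) = - (\<beta> *\<^sub>R (q - r))" by (simp add: eq_neg_iff_add_eq_0)
    then show ?thesis by (simp add: algebra_simps)
  qed
  then have "\<alpha> *\<^sub>R cross3 (q-p) (r-q) = cross3 ((\<alpha> + \<beta>) *\<^sub>R (q - r)) (- (q - r))"
    by (metis cross_mult_left minus_diff_eq)
  also have "\<dots> = 0"
  proof -
    have "r - q = - (q - r)" by simp
    then show ?thesis by (simp only: cross_mult_left cross_minus_right cross_refl) simp
  qed
  finally show False using assms abc by simp
qed

lemma vert_p:
  fixes p q r :: "real^3"
  assumes "cross3 (q-p) (r-q) \<noteq> 0"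
  shows "p \<notin> open_triangle p q r"
proof
  assume "p \<in> open_triangle p q r"
  then obtain \<alpha> \<beta> \<gamma> where abc: "0 < \<alpha>" "0 < \<beta>" "0 < \<gamma>" "\<alpha> + \<beta> + \<gamma> = 1"
    and e: "p = \<alpha> *\<^sub>R p + \<beta> *\<^sub>R q + \<gamma> *\<^sub>R r"
    unfolding open_triangle_def by blast
  have g: "\<alpha> = 1 - \<beta> - \<gamma>" using abc by simp
  have "\<gamma> *\<^sub>R (r - q) = - ((\<beta> + \<gamma>) *\<^sub>R (q - p))"
  proof -
    have "0 = \<alpha> *\<^sub>R p + \<beta> *\<^sub>R q + \<gamma> *\<^sub>R r - p" using e by simp
    also have "\<dots> = \<beta> *\<^sub>R (q - p) + \<gamma> *\<^sub>R (r - p)" unfolding g by (simp add: algebra_simps)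
    finally have "\<gamma> *\<^sub>R (r - p) = - (\<beta> *\<^sub>R (q - p))" by (simp add: eq_neg_iff_add_eq_0 add.commute)
    then show ?thesis by (simp add: algebra_simps)
  qed
  then have "\<gamma> *\<^sub>R cross3 (q-p) (r-q) = cross3 (q - p) (- ((\<beta> + \<gamma>) *\<^sub>R (q - p)))"
    by (metis cross_mult_right)
  also have "\<dots> = 0" by (simp add: cross_mult_right)
  finally show False using assms abc by simp
qed

lemma cc_e1: "cross_contrib p q r p q = 0"
  unfolding cross_contrib_def Let_def by (simp add: dot_cross_self)

lemma cc_e2: "cross_contrib p q r q r = 0"
  unfolding cross_contrib_def Let_def by (simp add: dot_cross_self)

lemma cc_e3: "cross_contrib p q r r b = 0"
proof -
  have "(p - r) \<bullet> cross3 (q - p) (r - q) = - ((q - p) \<bullet> cross3 (q - p) (r - q)) - ((r - q) \<bullet> cross3 (q - p) (r - q))"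
    by (simp add: algebra_simps inner_diff_left)
  then have z: "(p - r) \<bullet> cross3 (q - p) (r - q) = 0" by (simp add: dot_cross_self)
  show ?thesis
  proof (cases "cross3 (q - p) (r - q) = 0")
    case True then show ?thesis unfolding cross_contrib_def Let_def by simp
  next
    case False
    then show ?thesis unfolding cross_contrib_def Let_def z using vert_r[OF False] by simp
  qed
qed

lemma cc_e0: "cross_contrib p q r a p = 0"
proof (cases "cross3 (q - p) (r - q) = 0")
  case True then show ?thesis unfolding cross_contrib_def Let_def by simp
next
  case False
  show ?thesis
  proof (cases "(p - a) \<bullet> cross3 (q - p) (r - q) = 0")
    case True then show ?thesis unfolding cross_contrib_def Let_def by simp
  next
    case F2: False
    then show ?thesis unfolding cross_contrib_def Let_def using vert_p[OF False] by simp
  qed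
qed

lemma cc_nz:
  assumes "cross_contrib p q r a b \<noteq> 0"
  shows "\<exists>s. 0 \<le> s \<and> s \<le> 1 \<and> a + s *\<^sub>R (b - a) \<in> open_triangle p q r"
proof -
  define n where "n = cross3 (q - p) (r - q)"
  define d where "d = (b - a) \<bullet> n"
  define s where "s = ((p - a) \<bullet> n) / d"
  have c: "cross_contrib p q r a b = (if d = 0 then 0 else
      if a + s *\<^sub>R (b - a) \<in> open_triangle p q r then
         (if 0 < s \<and> s < 1 then sgn d else if s = 0 \<or> s = 1 then sgn d / 2 else 0)
       else 0)"
    unfolding cross_contrib_def Let_def n_def d_def s_def by simp
  have "a + s *\<^sub>R (b - a) \<in> open_triangle p q r" "0 \<le> s" "s \<le> 1"
    using assms unfolding c by (auto split: if_splits)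
  then show ?thesis by blast
qed
lemma angle_unique:
  fixes x y :: real
  assumes "0 \<le> x" "x < 2*pi" "0 \<le> y" "y < 2*pi" "sin x = sin y" "cos x = cos y"
  shows "x = y"
proof -
  obtain k :: int where k: "y = x + 2*pi*k" using sin_cos_eq_iff assms(5,6) by metis
  have "\<bar>2*pi*k\<bar> < 2*pi" using k assms(1-4) by auto
  then have "\<bar>real_of_int k\<bar> < 1" by (simp add: abs_mult)
  then have "k = 0" by linarith
  then show ?thesis using k by simp
qed

lemma flap_rep:
  fixes P Q F :: "real^3"
  assumes z: "P$3 = 0" "Q$3 = 0" and d: "0 < dist P Q" "dist P Q < 2"
    and FP: "dist F P = 1" and FQ: "dist F Q = 1"
  shows "\<exists>!\<theta>. 0 \<le> \<theta> \<and> \<theta> < 2*pi \<and> F = midpoint P Q + (sqrt (4 - (dist P Q)\<^sup>2)/2) *\<^sub>R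
            (cos \<theta> *\<^sub>R ((1/norm (Q-P)) *\<^sub>R vector[-((Q-P)$2), (Q-P)$1, 0]) + sin \<theta> *\<^sub>R e_z)"
proof -
  define dd where "dd = dist P Q"
  define h where "h = sqrt (4 - dd\<^sup>2)/2"
  define W1 where "W1 = Q$1 - P$1"
  define W2 where "W2 = Q$2 - P$2"
  define Y1 where "Y1 = F$1 - (P$1 + Q$1)/2"
  define Y2 where "Y2 = F$2 - (P$2 + Q$2)/2"
  define Y3 where "Y3 = F$3"
  have dd: "dd > 0" "dd < 2" using d unfolding dd_def by auto
  have nQP: "norm (Q - P) = dd" unfolding dd_def by (simp add: dist_norm norm_minus_commute)
  have dsq: "dd\<^sup>2 = W1\<^sup>2 + W2\<^sup>2"
    using norm3_sq[of "Q - P"] z unfolding nQP W1_def W2_def by simp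
  have hpos: "h > 0" unfolding h_def using dd
    by (simp add: power_strict_mono[of dd 2 2, simplified] abs_less_iff)
  have hsq: "h\<^sup>2 = 1 - dd\<^sup>2/4"
  proof -
    have "dd\<^sup>2 < 4" using dd by (simp add: power_strict_mono[of dd 2 2, simplified])
    then show ?thesis unfolding h_def by (simp add: power_divide)
  qed
  have e1: "(Y1 + W1/2)\<^sup>2 + (Y2 + W2/2)\<^sup>2 + Y3\<^sup>2 = 1"
  proof -
    have "(norm (F - P))\<^sup>2 = 1" using FP by (simp add: dist_norm)
    moreover have "Y1 + W1/2 = F$1 - P$1" "Y2 + W2/2 = F$2 - P$2" unfolding Y1_def W1_def Y2_def W2_def by (simp_all add: field_simps)
    ultimately show ?thesis using z unfolding norm3_sq Y3_def by simp
  qed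
  have e2: "(Y1 - W1/2)\<^sup>2 + (Y2 - W2/2)\<^sup>2 + Y3\<^sup>2 = 1"
  proof -
    have "(norm (F - Q))\<^sup>2 = 1" using FQ by (simp add: dist_norm)
    moreover have "Y1 - W1/2 = F$1 - Q$1" "Y2 - W2/2 = F$2 - Q$2" unfolding Y1_def W1_def Y2_def W2_def by (simp_all add: field_simps)
    ultimately show ?thesis using z unfolding norm3_sq Y3_def by simp
  qed
  have perp: "Y1*W1 + Y2*W2 = 0"
  proof -
    have "(Y1 + W1/2)\<^sup>2 + (Y2 + W2/2)\<^sup>2 - ((Y1 - W1/2)\<^sup>2 + (Y2 - W2/2)\<^sup>2) = 0" using e1 e2 by simp
    then show ?thesis by (simp add: power2_eq_square algebra_simps)
  qed
  have ysq: "Y1\<^sup>2 + Y2\<^sup>2 + Y3\<^sup>2 = h\<^sup>2"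
  proof -
    have "(Y1 + W1/2)\<^sup>2 + (Y2 + W2/2)\<^sup>2 + Y3\<^sup>2 + ((Y1 - W1/2)\<^sup>2 + (Y2 - W2/2)\<^sup>2 + Y3\<^sup>2) = 2" using e1 e2 by simp
    then have "2*(Y1\<^sup>2 + Y2\<^sup>2 + Y3\<^sup>2) + (W1\<^sup>2 + W2\<^sup>2)/2 = 2" by (simp add: power2_eq_square algebra_simps add_divide_distrib)
    then show ?thesis unfolding hsq dsq[symmetric] by simp
  qed
  define ca where "ca = (Y2*W1 - Y1*W2)/(dd*h)"
  define sa where "sa = Y3/h"
  have lag: "(Y2*W1 - Y1*W2)\<^sup>2 = (Y1\<^sup>2 + Y2\<^sup>2)*dd\<^sup>2"
  proof -
    have "(Y2*W1 - Y1*W2)\<^sup>2 + (Y1*W1 + Y2*W2)\<^sup>2 = (Y1\<^sup>2 + Y2\<^sup>2)*(W1\<^sup>2 + W2\<^sup>2)"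
      by (simp add: power2_eq_square algebra_simps)
    then show ?thesis using perp dsq by simp
  qed
  have cs1: "ca\<^sup>2 + sa\<^sup>2 = 1"
  proof -
    have "ca\<^sup>2 + sa\<^sup>2 = (Y1\<^sup>2 + Y2\<^sup>2)/h\<^sup>2 + Y3\<^sup>2/h\<^sup>2"
      unfolding ca_def sa_def using lag dd hpos by (simp add: power_divide power_mult_distrib)
    also have "\<dots> = (Y1\<^sup>2 + Y2\<^sup>2 + Y3\<^sup>2)/h\<^sup>2" by (simp add: add_divide_distrib)
    also have "\<dots> = 1" using ysq hpos by simp
    finally show ?thesis .
  qed
  define u :: "real^3" where "u = (1/norm (Q-P)) *\<^sub>R vector[-((Q-P)$2), (Q-P)$1, 0]"
  have u: "u$1 = -W2/dd" "u$2 = W1/dd" "u$3 = 0"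
    unfolding u_def nQP W1_def W2_def by (simp_all add: vector_3)
  define G where "G = (\<lambda>\<theta>. midpoint P Q + h *\<^sub>R (cos \<theta> *\<^sub>R u + sin \<theta> *\<^sub>R e_z))"
  have G1: "(G \<theta>)$1 = (P$1+Q$1)/2 + h*cos \<theta>*(-W2/dd)" for \<theta>
    unfolding G_def using u by (simp add: midpoint_def)
  have G2: "(G \<theta>)$2 = (P$2+Q$2)/2 + h*cos \<theta>*(W1/dd)" for \<theta>
    unfolding G_def using u by (simp add: midpoint_def)
  have G3: "(G \<theta>)$3 = h* sin \<theta>" for \<theta>
    unfolding G_def using u z by (simp add: midpoint_def)
  have Geq: "F = G \<theta> \<longleftrightarrow> Y1 = -h*cos \<theta>*W2/dd \<and> Y2 = h*cos \<theta>*W1/dd \<and> Y3 = h* sin \<theta>" for \<theta>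
  proof -
    have "F = G \<theta> \<longleftrightarrow> F$1 = (G \<theta>)$1 \<and> F$2 = (G \<theta>)$2 \<and> F$3 = (G \<theta>)$3"
      unfolding vec_eq_iff forall_3 by simp
    also have "\<dots> \<longleftrightarrow> Y1 = -h*cos \<theta>*W2/dd \<and> Y2 = h*cos \<theta>*W1/dd \<and> Y3 = h* sin \<theta>"
      unfolding G1 G2 G3 Y1_def Y2_def Y3_def by auto
    finally show ?thesis .
  qed
  have uniq: "cos \<theta> = ca \<and> sin \<theta> = sa" if "F = G \<theta>" for \<theta>
  proof -
    have y: "Y1 = -h*cos \<theta>*W2/dd" "Y2 = h*cos \<theta>*W1/dd" "Y3 = h* sin \<theta>" using that Geq by auto
    have "Y2*W1 - Y1*W2 = h*cos \<theta>*(W1\<^sup>2 + W2\<^sup>2)/dd" unfolding y by (simp add: power2_eq_square algebra_simps add_divide_distrib)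
    also have "\<dots> = h*cos \<theta>*dd" using dd unfolding dsq[symmetric] by (simp add: power2_eq_square)
    finally have "ca = cos \<theta>" unfolding ca_def using dd hpos by simp
    moreover have "sa = sin \<theta>" unfolding sa_def y(3) using hpos by simp
    ultimately show ?thesis by simp
  qed
  obtain \<theta>0 where t0: "0 \<le> \<theta>0" "\<theta>0 < 2*pi" "ca = cos \<theta>0" "sa = sin \<theta>0"
    using sincos_total_2pi[OF cs1] by blast
  have "F = G \<theta>0"
  proof -
    have "Y1 = -h*ca*W2/dd"
    proof -
      have "-h*ca*W2/dd = -(Y2*W1*W2 - Y1*W2\<^sup>2)/dd\<^sup>2" unfolding ca_def using dd hpos
        by (simp add: field_simps power2_eq_square)
      also have "\<dots> = (Y1*W1\<^sup>2 + Y1*W2\<^sup>2)/dd\<^sup>2"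
      proof -
        have "Y2*W2 = -Y1*W1" using perp by simp
        then have "Y2*W1*W2 = -Y1*W1\<^sup>2" by (metis (no_types, opaque_lifting) mult.assoc mult.commute mult_minus_left power2_eq_square)
        then show ?thesis by (simp add: power2_eq_square)
      qed
      also have "\<dots> = Y1"
      proof -
        have "Y1*W1\<^sup>2 + Y1*W2\<^sup>2 = Y1*dd\<^sup>2" using dsq by (simp add: distrib_left)
        then show ?thesis using dd by simp
      qed
      finally show ?thesis by simp
    qed
    moreover have "Y2 = h*ca*W1/dd"
    proof -
      have "h*ca*W1/dd = (Y2*W1\<^sup>2 - Y1*W1*W2)/dd\<^sup>2" unfolding ca_def using dd hpos
        by (simp add: field_simps power2_eq_square)
      also have "\<dots> = (Y2*W1\<^sup>2 + Y2*W2\<^sup>2)/dd\<^sup>2"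
      proof -
        have "Y1*W1 = -Y2*W2" using perp by simp
        then have "Y1*W1*W2 = -Y2*W2\<^sup>2" by (metis (no_types, opaque_lifting) mult.assoc mult.commute mult_minus_left power2_eq_square)
        then show ?thesis by (simp add: power2_eq_square)
      qed
      also have "\<dots> = Y2"
      proof -
        have "Y2*W1\<^sup>2 + Y2*W2\<^sup>2 = Y2*dd\<^sup>2" using dsq by (simp add: distrib_left)
        then show ?thesis using dd by simp
      qed
      finally show ?thesis by simp
    qed
    moreover have "Y3 = h* sa" unfolding sa_def using hpos by simp
    ultimately show ?thesis unfolding Geq t0 by simp
  qed
  then have ex1: "\<exists>!\<theta>. 0 \<le> \<theta> \<and> \<theta> < 2*pi \<and> F = G \<theta>"
    using t0 uniq angle_unique by (smt (verit))
  show ?thesis using ex1 unfolding G_def u_def h_def dd_def .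
qed


lemma sum16: "sum f {1..6::nat} = f 1 + f 2 + f 3 + f 4 + f 5 + (f 6 :: real)"
  by (simp add: numeral_eq_Suc atLeastAtMostSuc_conv add.commute add.left_commute)

lemma sin_range: "0 \<le> x \<Longrightarrow> x < 2*pi \<Longrightarrow> sin x > 0 \<Longrightarrow> 0 < x \<and> x < pi"
  by (metis less_eq_real_def not_less sin_le_zero sin_zero)

lemma sum_range:
  assumes "0 < x" "x < pi" "0 < y" "y < pi" "sin x * cos y + cos x * sin y > 0"
  shows "x + y < pi"
proof (rule ccontr)
  assume "\<not> x + y < pi"
  then have "sin (x+y) \<le> 0" using sin_le_zero[of "x+y"] assms by simp
  then show False using assms(5) by (simp add: sin_add)
qed

lemma hpos: "0 < d \<Longrightarrow> d < (2::real) \<Longrightarrow> sqrt (4 - d\<^sup>2)/2 > 0"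
  by (simp add: power_strict_mono[of d 2 2, simplified] abs_less_iff)

lemma indep_std:
  fixes A B C F :: "real^3"
  assumes "A = 0" "B$2 = 0" "B$3 = 0" "B$1 \<noteq> 0" "C$3 = 0" "C$2 \<noteq> 0" "F$3 \<noteq> 0"
   "x + y + z + f = 0" "x *\<^sub>R A + y *\<^sub>R B + z *\<^sub>R C + f *\<^sub>R F = 0"
  shows "x = 0 \<and> y = 0 \<and> z = 0 \<and> f = 0"
proof -
  have "(x *\<^sub>R A + y *\<^sub>R B + z *\<^sub>R C + f *\<^sub>R F)$3 = 0" using assms(9) by simp
  then have f: "f = 0" using assms by simp
  have "(x *\<^sub>R A + y *\<^sub>R B + z *\<^sub>R C + f *\<^sub>R F)$2 = 0" using assms(9) by simp
  then have z: "z = 0" using assms f by simp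
  have "(x *\<^sub>R A + y *\<^sub>R B + z *\<^sub>R C + f *\<^sub>R F)$1 = 0" using assms(9) by simp
  then have y: "y = 0" using assms f z by simp
  show ?thesis using f z y assms(8) by simp
qed

lemma tri_ex: "X \<in> open_triangle P F Q \<Longrightarrow> \<exists>a b c. X = a *\<^sub>R P + b *\<^sub>R F + c *\<^sub>R Q \<and> a > 0 \<and> b > 0 \<and> c > 0 \<and> a + b + c = 1"
  unfolding open_triangle_def by blast

lemma tri_Q:
  fixes X P F Q :: "real^3"
  assumes "X = a *\<^sub>R P + b *\<^sub>R F + c *\<^sub>R Q" "a + b + c = 1"
  shows "X - Q = a *\<^sub>R (P - Q) + b *\<^sub>R (F - Q)"
proof -
  have "X - Q = a *\<^sub>R P + b *\<^sub>R F + c *\<^sub>R Q - (a+b+c) *\<^sub>R Q" using assms by simp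
  also have "\<dots> = a *\<^sub>R (P - Q) + b *\<^sub>R (F - Q)" by (simp add: algebra_simps scaleR_add_left)
  finally show ?thesis .
qed

lemma tri_P:
  fixes X P F Q :: "real^3"
  assumes "X = a *\<^sub>R P + b *\<^sub>R F + c *\<^sub>R Q" "a + b + c = 1"
  shows "X - P = c *\<^sub>R (Q - P) + b *\<^sub>R (F - P)"
proof -
  have "X - P = a *\<^sub>R P + b *\<^sub>R F + c *\<^sub>R Q - (a+b+c) *\<^sub>R P" using assms by simp
  also have "\<dots> = c *\<^sub>R (Q - P) + b *\<^sub>R (F - P)" by (simp add: algebra_simps scaleR_add_left)
  finally show ?thesis .
qed

lemma seg_V:
  fixes X P Q V :: "real^3"
  shows "P + s *\<^sub>R (Q - P) - V = (1-s) *\<^sub>R (P - V) + s *\<^sub>R (Q - V)"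
  by (simp add: algebra_simps)

theorem mainTheorem6:
  fixes v :: "nat \<Rightarrow> real^3" and R :: "real^3^3" and t :: "real^3"
  assumes "equilateral_hexagon v" and "embedded_hexagon v"
    and "is_rotation3 R"
    and "standard_position (\<lambda>j. R *v v j + t)"
    and "aa_defined (\<lambda>j. R *v v j + t)"
    and "JCC v = (1, 1)"
  shows "(\<forall>i\<in>{1,2,3}. 0 < aa_theta (\<lambda>j. R *v v j + t) i \<and> aa_theta (\<lambda>j. R *v v j + t) i < pi)
       \<and> aa_theta (\<lambda>j. R *v v j + t) 1 + aa_theta (\<lambda>j. R *v v j + t) 2 < pi
       \<and> aa_theta (\<lambda>j. R *v v j + t) 1 + aa_theta (\<lambda>j. R *v v j + t) 3 < pi
       \<and> aa_theta (\<lambda>j. R *v v j + t) 2 + aa_theta (\<lambda>j. R *v v j + t) 3 < pi"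
proof -
  define w where "w = (\<lambda>j. R *v v j + t)"
  have Rr: "is_rotation3 R" by fact
  have J: "JCC w = (1,1)" using JCC_inv[OF Rr] assms(6) unfolding w_def by simp
  have eq: "equilateral_hexagon w" using equi_inv[OF Rr assms(1)] unfolding w_def .
  have sp: "standard_position w" using assms(4) unfolding w_def .
  have ad: "aa_defined w" using assms(5) unfolding w_def .
  define A where "A = w 1"
  define B where "B = w 3"
  define C where "C = w 5"
  define F1 where "F1 = w 2"
  define F2 where "F2 = w 4"
  define F3 where "F3 = w 6"
  have hv: "hv w 1 = A" "hv w 2 = F1" "hv w 3 = B" "hv w 4 = F2" "hv w 5 = C" "hv w 6 = F3"
     "hv w 7 = A" "hv w 9 = B" "hv w 11 = C"
    unfolding A_def B_def C_def F1_def F2_def F3_def by (simp_all add: hv_def) (simp_all add: numeral_eq_Suc)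
  have A0: "A = 0" and B: "B$1 > 0" "B$2 = 0" "B$3 = 0" and C: "C$3 = 0" "C$2 > 0"
    using sp unfolding standard_position_def hv by simp_all
  have e6: "\<And>i. i \<in> {1..6} \<Longrightarrow> dist (hv w i) (hv w (i + 1)) = 1" using eq unfolding equilateral_hexagon_def by blast
  have nn: "(1::nat) + 1 = 2" "(2::nat) + 1 = 3" "(3::nat) + 1 = 4" "(4::nat) + 1 = 5" "(5::nat) + 1 = 6" "(6::nat) + 1 = 7"
    "2 * (1::nat) - 1 = 1" "2 * (1::nat) + 1 = 3" "2 * (2::nat) - 1 = 3" "2 * (2::nat) + 1 = 5" "2 * (3::nat) - 1 = 5" "2 * (3::nat) + 1 = 7"
    "2 * (1::nat) = 2" "2 * (2::nat) = 4" "2 * (3::nat) = 6" "2 * (1::nat) + 3 = 5" "2 * (2::nat) + 3 = 7" "2 * (3::nat) + 3 = 9"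
    "(2::nat) + 5 = 7" "(4::nat) + 5 = 9" "(6::nat) + 5 = 11"
    "(2::nat) - 1 = 1" "(4::nat) - 1 = 3" "(6::nat) - 1 = 5"
    "(2::nat) + 3 = 5" "(4::nat) + 3 = 7" "(6::nat) + 3 = 9"
    by simp_all
  have "dist (hv w 1) (hv w (1+1)) = 1" by (rule e6) simp
  moreover have "dist (hv w 2) (hv w (2+1)) = 1" by (rule e6) simp
  moreover have "dist (hv w 3) (hv w (3+1)) = 1" by (rule e6) simp
  moreover have "dist (hv w 4) (hv w (4+1)) = 1" by (rule e6) simp
  moreover have "dist (hv w 5) (hv w (5+1)) = 1" by (rule e6) simp
  moreover have "dist (hv w 6) (hv w (6+1)) = 1" by (rule e6) simp
  ultimately have dist: "dist A F1 = 1" "dist F1 B = 1" "dist B F2 = 1" "dist F2 C = 1" "dist C F3 = 1" "dist F3 A = 1"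
    by (simp_all only: hv nn)
  have ad2: "\<And>i. i \<in> {1,2,3} \<Longrightarrow> 0 < aa_d w i \<and> aa_d w i < 2" using ad unfolding aa_defined_def by blast
  have "0 < aa_d w 1 \<and> aa_d w 1 < 2" by (rule ad2) simp
  moreover have "0 < aa_d w 2 \<and> aa_d w 2 < 2" by (rule ad2) simp
  moreover have "0 < aa_d w 3 \<and> aa_d w 3 < 2" by (rule ad2) simp
  moreover have ad_eq: "aa_d w 1 = dist A B" "aa_d w 2 = dist B C" "aa_d w 3 = dist C A"
  proof -
    have "aa_d w 1 = dist (hv w 1) (hv w 3)" "aa_d w 2 = dist (hv w 3) (hv w 5)" "aa_d w 3 = dist (hv w 5) (hv w 7)"
      unfolding aa_d_def by (simp_all only: nn)
    then
    show "aa_d w 1 = dist A B" "aa_d w 2 = dist B C" "aa_d w 3 = dist C A" by (simp_all only: hv)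
  qed
  ultimately have dd: "0 < dist A B" "dist A B < 2" "0 < dist B C" "dist B C < 2" "0 < dist C A" "dist C A < 2"
    by (simp_all only:)
  have inner3: "\<And>x y :: real^3. x \<bullet> y = x$1*y$1 + x$2*y$2 + x$3*y$3"
    by (simp add: inner_vec_def sum_3)
  have am: "aa_m w 1 = midpoint A B" "aa_m w 2 = midpoint B C" "aa_m w 3 = midpoint C A"
  proof -
    have "aa_m w 1 = midpoint (hv w 1) (hv w 3)" "aa_m w 2 = midpoint (hv w 3) (hv w 5)" "aa_m w 3 = midpoint (hv w 5) (hv w 7)"
      unfolding aa_m_def by (simp_all only: nn)
    then show "aa_m w 1 = midpoint A B" "aa_m w 2 = midpoint B C" "aa_m w 3 = midpoint C A" by (simp_all only: hv)
  qed
  have A3: "A$3 = 0" "A$1 = 0" "A$2 = 0" using A0 by simp_all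
  define u1 :: "real^3" where "u1 = (1/norm (B - A)) *\<^sub>R vector[-((B-A)$2), (B-A)$1, 0]"
  define u2 :: "real^3" where "u2 = (1/norm (C - B)) *\<^sub>R vector[-((C-B)$2), (C-B)$1, 0]"
  define u3 :: "real^3" where "u3 = (1/norm (A - C)) *\<^sub>R vector[-((A-C)$2), (A-C)$1, 0]"
  have nAB: "norm (B - A) > 0" "norm (C - B) > 0" "norm (A - C) > 0"
    using dd by (simp_all add: dist_norm norm_minus_commute)
  have au: "aa_u w 1 = u1" "aa_u w 2 = u2" "aa_u w 3 = u3"
  proof -
    have "aa_u w 1 = (if u1 \<bullet> (C - midpoint A B) > 0 then u1 else - u1)"
      unfolding aa_u_def Let_def u1_def by (simp only: nn hv am)
    moreover have "u1 \<bullet> (C - midpoint A B) > 0"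
      unfolding u1_def inner3 using A3 B C nAB by (simp add: vector_3 midpoint_def)
    ultimately show "aa_u w 1 = u1" by simp
    have "aa_u w 2 = (if u2 \<bullet> (A - midpoint B C) > 0 then u2 else - u2)"
      unfolding aa_u_def Let_def u2_def by (simp only: nn hv am)
    moreover have "u2 \<bullet> (A - midpoint B C) > 0"
    proof -
      have "u2 \<bullet> (A - midpoint B C) = (1/norm (C - B)) * (B$1 * C$2)"
        unfolding u2_def inner3 using A3 B C by (simp add: vector_3 midpoint_def algebra_simps)
      then show ?thesis using nAB B C by simp
    qed
    ultimately show "aa_u w 2 = u2" by simp
    have "aa_u w 3 = (if u3 \<bullet> (B - midpoint C A) > 0 then u3 else - u3)"
      unfolding aa_u_def Let_def u3_def by (simp only: nn hv am)
    moreover have "u3 \<bullet> (B - midpoint C A) > 0"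
    proof -
      have "u3 \<bullet> (B - midpoint C A) = (1/norm (A - C)) * (B$1 * C$2)"
        unfolding u3_def inner3 using A3 B C by (simp add: vector_3 midpoint_def algebra_simps)
      then show ?thesis using nAB B C by simp
    qed
    ultimately show "aa_u w 3 = u3" by simp
  qed
  define th1 where "th1 = aa_theta w 1"
  define th2 where "th2 = aa_theta w 2"
  define th3 where "th3 = aa_theta w 3"
  define h1 where "h1 = sqrt (4 - (dist A B)\<^sup>2)/2"
  define h2 where "h2 = sqrt (4 - (dist B C)\<^sup>2)/2"
  define h3 where "h3 = sqrt (4 - (dist C A)\<^sup>2)/2"
  have hp: "h1 > 0" "h2 > 0" "h3 > 0" unfolding h1_def h2_def h3_def using hpos dd by simp_all
  have th1: "0 \<le> th1 \<and> th1 < 2*pi \<and> F1 = midpoint A B + h1 *\<^sub>R (cos th1 *\<^sub>R u1 + sin th1 *\<^sub>R e_z)"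
  proof -
    have "th1 = (THE \<theta>. 0 \<le> \<theta> \<and> \<theta> < 2*pi \<and> F1 = midpoint A B + h1 *\<^sub>R (cos \<theta> *\<^sub>R u1 + sin \<theta> *\<^sub>R e_z))"
      unfolding th1_def aa_theta_def h1_def by (simp only: nn hv am au ad_eq)
    moreover have "\<exists>!\<theta>. 0 \<le> \<theta> \<and> \<theta> < 2*pi \<and> F1 = midpoint A B + h1 *\<^sub>R (cos \<theta> *\<^sub>R u1 + sin \<theta> *\<^sub>R e_z)"
      unfolding h1_def u1_def
      by (rule flap_rep) (use A3 B dd dist in \<open>simp_all add: dist_commute\<close>)
    ultimately show ?thesis using theI' by simp
  qed
  have th2: "0 \<le> th2 \<and> th2 < 2*pi \<and> F2 = midpoint B C + h2 *\<^sub>R (cos th2 *\<^sub>R u2 + sin th2 *\<^sub>R e_z)"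
  proof -
    have "th2 = (THE \<theta>. 0 \<le> \<theta> \<and> \<theta> < 2*pi \<and> F2 = midpoint B C + h2 *\<^sub>R (cos \<theta> *\<^sub>R u2 + sin \<theta> *\<^sub>R e_z))"
      unfolding th2_def aa_theta_def h2_def by (simp only: nn hv am au ad_eq)
    moreover have "\<exists>!\<theta>. 0 \<le> \<theta> \<and> \<theta> < 2*pi \<and> F2 = midpoint B C + h2 *\<^sub>R (cos \<theta> *\<^sub>R u2 + sin \<theta> *\<^sub>R e_z)"
      unfolding h2_def u2_def
      by (rule flap_rep) (use C B dd dist in \<open>simp_all add: dist_commute\<close>)
    ultimately show ?thesis using theI' by simp
  qed
  have th3: "0 \<le> th3 \<and> th3 < 2*pi \<and> F3 = midpoint C A + h3 *\<^sub>R (cos th3 *\<^sub>R u3 + sin th3 *\<^sub>R e_z)"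
  proof -
    have "th3 = (THE \<theta>. 0 \<le> \<theta> \<and> \<theta> < 2*pi \<and> F3 = midpoint C A + h3 *\<^sub>R (cos \<theta> *\<^sub>R u3 + sin \<theta> *\<^sub>R e_z))"
      unfolding th3_def aa_theta_def h3_def by (simp only: nn hv am au ad_eq)
    moreover have "\<exists>!\<theta>. 0 \<le> \<theta> \<and> \<theta> < 2*pi \<and> F3 = midpoint C A + h3 *\<^sub>R (cos \<theta> *\<^sub>R u3 + sin \<theta> *\<^sub>R e_z)"
      unfolding h3_def u3_def
      by (rule flap_rep) (use C A3 dd dist in \<open>simp_all add: dist_commute\<close>)
    ultimately show ?thesis using theI' by simp
  qed
  have z123: "F1$3 = h1 * sin th1" "F2$3 = h2 * sin th2" "F3$3 = h3 * sin th3"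
  proof -
    have "u1$3 = 0" "u2$3 = 0" "u3$3 = 0" unfolding u1_def u2_def u3_def by (simp_all add: vector_3)
    then show "F1$3 = h1 * sin th1" "F2$3 = h2 * sin th2" "F3$3 = h3 * sin th3"
      using th1 th2 th3 A3 B C by (simp_all add: midpoint_def)
  qed
  have Jc: "Delta w 2 * Delta w 4 * Delta w 6 = 1" "(Delta w 2)\<^sup>2 * (Delta w 4)\<^sup>2 * (Delta w 6)\<^sup>2 * curl w = 1"
    using J unfolding JCC_def by simp_all
  have curl1: "curl w = 1"
  proof -
    have "(Delta w 2)\<^sup>2 * (Delta w 4)\<^sup>2 * (Delta w 6)\<^sup>2 = (Delta w 2 * Delta w 4 * Delta w 6)\<^sup>2"
      by (simp add: power_mult_distrib)
    then show ?thesis using Jc by simp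
  qed
  have Dnz: "Delta w 2 \<noteq> 0" "Delta w 4 \<noteq> 0" "Delta w 6 \<noteq> 0" using Jc(1) by auto
  have zF1: "F1$3 > 0"
  proof -
    have "curl w = sgn (cross3 (B - A) (C - A) \<bullet> (F1 - A))"
      unfolding curl_def by (simp only: hv)
    moreover have "cross3 (B - A) (C - A) \<bullet> (F1 - A) = B$1 * C$2 * F1$3"
      unfolding inner3 cross_components using A3 B C by simp
    ultimately have "B$1 * C$2 * F1$3 > 0" using curl1 by (simp add: sgn_1_pos)
    moreover have "B$1 * C$2 > 0" using B C by simp
    ultimately show ?thesis by (simp add: zero_less_mult_iff)
  qed
  have D2: "Delta w 2 = cross_contrib A F1 B F2 C + cross_contrib A F1 B C F3"
    unfolding Delta_def sum16 by (simp only: nn hv cc_e0 cc_e1 cc_e2 cc_e3 add_0_left add_0_right)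
  have D4: "Delta w 4 = cross_contrib B F2 C A F1 + cross_contrib B F2 C F3 A"
    unfolding Delta_def sum16 by (simp only: nn hv cc_e0 cc_e1 cc_e2 cc_e3 add_0_left add_0_right)
  have D6: "Delta w 6 = cross_contrib C F3 A F1 B + cross_contrib C F3 A B F2"
    unfolding Delta_def sum16 by (simp only: nn hv cc_e0 cc_e1 cc_e2 cc_e3 add_0_left add_0_right)
  define P4 where "P4 = (\<exists>s. 0 \<le> s \<and> s \<le> 1 \<and> F2 + s *\<^sub>R (C - F2) \<in> open_triangle A F1 B)"
  define P5 where "P5 = (\<exists>s. 0 \<le> s \<and> s \<le> 1 \<and> C + s *\<^sub>R (F3 - C) \<in> open_triangle A F1 B)"
  define P1 where "P1 = (\<exists>s. 0 \<le> s \<and> s \<le> 1 \<and> A + s *\<^sub>R (F1 - A) \<in> open_triangle B F2 C)"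
  define P6 where "P6 = (\<exists>s. 0 \<le> s \<and> s \<le> 1 \<and> F3 + s *\<^sub>R (A - F3) \<in> open_triangle B F2 C)"
  define P2 where "P2 = (\<exists>s. 0 \<le> s \<and> s \<le> 1 \<and> F1 + s *\<^sub>R (B - F1) \<in> open_triangle C F3 A)"
  define P3 where "P3 = (\<exists>s. 0 \<le> s \<and> s \<le> 1 \<and> B + s *\<^sub>R (F2 - B) \<in> open_triangle C F3 A)"
  have "cross_contrib A F1 B F2 C \<noteq> 0 \<or> cross_contrib A F1 B C F3 \<noteq> 0" using Dnz(1) D2 by auto
  then have P45: "P4 \<or> P5" unfolding P4_def P5_def using cc_nz by blast
  have "cross_contrib B F2 C F3 A \<noteq> 0 \<or> cross_contrib B F2 C A F1 \<noteq> 0" using Dnz(2) D4 by auto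
  then have P61: "P6 \<or> P1" unfolding P6_def P1_def using cc_nz by blast
  have "cross_contrib C F3 A F1 B \<noteq> 0 \<or> cross_contrib C F3 A B F2 \<noteq> 0" using Dnz(3) D6 by auto
  then have P23: "P2 \<or> P3" unfolding P2_def P3_def using cc_nz by blast
  have sin1: "sin th1 > 0" using zF1 z123(1) hp(1) by (metis zero_less_mult_pos)
  have S4: "F2$3 > 0" if "P4"
  proof -
    have "\<exists>s. 0 \<le> s \<and> s \<le> 1 \<and> F2 + s *\<^sub>R (C - F2) \<in> open_triangle A F1 B" using that by (simp only: P4_def)
    then obtain s where s: "0 \<le> s" "s \<le> 1" "F2 + s *\<^sub>R (C - F2) \<in> open_triangle A F1 B" by (elim exE conjE)
    from tri_ex[OF s(3)] obtain a b c where abc: "F2 + s *\<^sub>R (C - F2) = a *\<^sub>R A + b *\<^sub>R F1 + c *\<^sub>R B" "a>0" "b>0" "c>0" "a+b+c=1"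
      by (elim exE conjE)
    have eq: "F2 + s *\<^sub>R (C - F2) = (1 - (1-s)) *\<^sub>R C + (1-s) *\<^sub>R F2" by (simp add: algebra_simps)
    have "0 \<le> 1 - s" "0 \<le> s" using s by simp_all
    then show ?thesis using sign_z[OF abc(1) abc(3) A3(1) B(3) zF1 eq C(1)] by blast
  qed
  have S5: "F3$3 > 0" if "P5"
  proof -
    have "\<exists>s. 0 \<le> s \<and> s \<le> 1 \<and> C + s *\<^sub>R (F3 - C) \<in> open_triangle A F1 B" using that by (simp only: P5_def)
    then obtain s where s: "0 \<le> s" "s \<le> 1" "C + s *\<^sub>R (F3 - C) \<in> open_triangle A F1 B" by (elim exE conjE)
    from tri_ex[OF s(3)] obtain a b c where abc: "C + s *\<^sub>R (F3 - C) = a *\<^sub>R A + b *\<^sub>R F1 + c *\<^sub>R B" "a>0" "b>0" "c>0" "a+b+c=1"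
      by (elim exE conjE)
    have eq: "C + s *\<^sub>R (F3 - C) = (1 - s) *\<^sub>R C + s *\<^sub>R F3" by (simp add: algebra_simps)
    have "0 \<le> 1 - s" "0 \<le> s" using s by simp_all
    then show ?thesis using sign_z[OF abc(1) abc(3) A3(1) B(3) zF1 eq C(1)] by blast
  qed
  have S6: "F3$3 > 0" if "P6" "F2$3 > 0"
  proof -
    have "\<exists>s. 0 \<le> s \<and> s \<le> 1 \<and> F3 + s *\<^sub>R (A - F3) \<in> open_triangle B F2 C" using that by (simp only: P6_def)
    then obtain s where s: "0 \<le> s" "s \<le> 1" "F3 + s *\<^sub>R (A - F3) \<in> open_triangle B F2 C" by (elim exE conjE)
    from tri_ex[OF s(3)] obtain a b c where abc: "F3 + s *\<^sub>R (A - F3) = a *\<^sub>R B + b *\<^sub>R F2 + c *\<^sub>R C" "a>0" "b>0" "c>0" "a+b+c=1"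
      by (elim exE conjE)
    have eq: "F3 + s *\<^sub>R (A - F3) = (1 - (1-s)) *\<^sub>R A + (1-s) *\<^sub>R F3" by (simp add: algebra_simps)
    have "0 \<le> 1 - s" "0 \<le> s" using s by simp_all
    then show ?thesis using sign_z[OF abc(1) abc(3) B(3) C(1) that(2) eq A3(1)] by blast
  qed
  have S3: "F2$3 > 0" if "P3" "F3$3 > 0"
  proof -
    have "\<exists>s. 0 \<le> s \<and> s \<le> 1 \<and> B + s *\<^sub>R (F2 - B) \<in> open_triangle C F3 A" using that by (simp only: P3_def)
    then obtain s where s: "0 \<le> s" "s \<le> 1" "B + s *\<^sub>R (F2 - B) \<in> open_triangle C F3 A" by (elim exE conjE)
    from tri_ex[OF s(3)] obtain a b c where abc: "B + s *\<^sub>R (F2 - B) = a *\<^sub>R C + b *\<^sub>R F3 + c *\<^sub>R A" "a>0" "b>0" "c>0" "a+b+c=1"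
      by (elim exE conjE)
    have eq: "B + s *\<^sub>R (F2 - B) = (1 - s) *\<^sub>R B + s *\<^sub>R F2" by (simp add: algebra_simps)
    have "0 \<le> 1 - s" "0 \<le> s" using s by simp_all
    then show ?thesis using sign_z[OF abc(1) abc(3) C(1) A3(1) that(2) eq B(3)] by blast
  qed
  have F1nz: "F1$3 \<noteq> 0" using zF1 by simp
  have B1nz: "B$1 \<noteq> 0" and C2nz: "C$2 \<noteq> 0" using B C by simp_all
  have IB: "\<And>p q r f. p+q+r+f = 0 \<Longrightarrow> p *\<^sub>R A + q *\<^sub>R B + r *\<^sub>R C + f *\<^sub>R F1 = 0 \<Longrightarrow> q = 0 \<and> f = 0"
  proof -
    fix p q r f assume "p+q+r+f = 0" "p *\<^sub>R A + q *\<^sub>R B + r *\<^sub>R C + f *\<^sub>R F1 = 0"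
    from indep_std[OF A0 B(2) B(3) B1nz C(1) C2nz F1nz this] show "q = 0 \<and> f = 0" by (elim conjE) (intro conjI)
  qed
  have IA: "\<And>p q r f. p+q+r+f = 0 \<Longrightarrow> p *\<^sub>R B + q *\<^sub>R A + r *\<^sub>R C + f *\<^sub>R F1 = 0 \<Longrightarrow> q = 0 \<and> f = 0"
  proof -
    fix p q r f assume a1: "p+q+r+f = 0" and a2: "p *\<^sub>R B + q *\<^sub>R A + r *\<^sub>R C + f *\<^sub>R F1 = 0"
    have "q+p+r+f = 0" using a1 by simp
    moreover have "q *\<^sub>R A + p *\<^sub>R B + r *\<^sub>R C + f *\<^sub>R F1 = 0" using a2 by (simp add: add_ac)
    ultimately have "q = 0 \<and> p = 0 \<and> r = 0 \<and> f = 0" by (rule indep_std[OF A0 B(2) B(3) B1nz C(1) C2nz F1nz])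
    then show "q = 0 \<and> f = 0" by (elim conjE) (intro conjI)
  qed
  have IC: "\<And>p q r f. F2$3 \<noteq> 0 \<Longrightarrow> p+q+r+f = 0 \<Longrightarrow> p *\<^sub>R B + q *\<^sub>R C + r *\<^sub>R A + f *\<^sub>R F2 = 0 \<Longrightarrow> q = 0 \<and> f = 0"
  proof -
    fix p q r f assume a0: "F2$3 \<noteq> 0" and a1: "p+q+r+f = 0" and a2: "p *\<^sub>R B + q *\<^sub>R C + r *\<^sub>R A + f *\<^sub>R F2 = 0"
    have "r+p+q+f = 0" using a1 by simp
    moreover have "r *\<^sub>R A + p *\<^sub>R B + q *\<^sub>R C + f *\<^sub>R F2 = 0" using a2 by (simp add: add_ac)
    ultimately have "r = 0 \<and> p = 0 \<and> q = 0 \<and> f = 0" by (rule indep_std[OF A0 B(2) B(3) B1nz C(1) C2nz a0])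
    then show "q = 0 \<and> f = 0" by (elim conjE) (intro conjI)
  qed
  have EB: "False" if "P4" "P1"
  proof -
    have "\<exists>s. 0 \<le> s \<and> s \<le> 1 \<and> F2 + s *\<^sub>R (C - F2) \<in> open_triangle A F1 B" using that(1) by (simp only: P4_def)
    then obtain s where s: "0 \<le> s" "s \<le> 1" "F2 + s *\<^sub>R (C - F2) \<in> open_triangle A F1 B" by (elim exE conjE)
    from tri_ex[OF s(3)] obtain a b c where abc: "F2 + s *\<^sub>R (C - F2) = a *\<^sub>R A + b *\<^sub>R F1 + c *\<^sub>R B" "a>0" "b>0" "c>0" "a+b+c=1"
      by (elim exE conjE)
    have "\<exists>t. 0 \<le> t \<and> t \<le> 1 \<and> A + t *\<^sub>R (F1 - A) \<in> open_triangle B F2 C" using that(2) by (simp only: P1_def)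
    then obtain t where t: "0 \<le> t" "t \<le> 1" "A + t *\<^sub>R (F1 - A) \<in> open_triangle B F2 C" by (elim exE conjE)
    from tri_ex[OF t(3)] obtain a2 b2 c2 where abc2: "A + t *\<^sub>R (F1 - A) = a2 *\<^sub>R B + b2 *\<^sub>R F2 + c2 *\<^sub>R C" "a2>0" "b2>0" "c2>0" "a2+b2+c2=1"
      by (elim exE conjE)
    have x1: "F2 + s *\<^sub>R (C - F2) = a *\<^sub>R A + c *\<^sub>R B + b *\<^sub>R F1" using abc(1) by (simp add: add_ac)
    have x5: "a + c + b = 1" using abc(5) by simp
    have x6: "F2 + s *\<^sub>R (C - F2) = (1 - (1-s)) *\<^sub>R C + (1-s) *\<^sub>R F2" by (simp add: algebra_simps)
    have x7: "0 \<le> 1 - s" "1 - s \<le> 1" using s by simp_all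
    have y1: "A + t *\<^sub>R (F1 - A) = (1-t) *\<^sub>R A + t *\<^sub>R F1" by (simp add: algebra_simps)
    have y2: "A + t *\<^sub>R (F1 - A) = a2 *\<^sub>R B + c2 *\<^sub>R C + b2 *\<^sub>R F2" using abc2(1) by (simp add: add_ac)
    have y5: "a2 + c2 + b2 = 1" using abc2(5) by simp
    show False by (rule excl[OF IB x1 abc(2) abc(4) abc(3) x5 x6 x7 y1 y2 abc2(2) abc2(4) abc2(3) y5])
  qed
  have EA: "False" if "P5" "P2"
  proof -
    have "\<exists>s. 0 \<le> s \<and> s \<le> 1 \<and> C + s *\<^sub>R (F3 - C) \<in> open_triangle A F1 B" using that(1) by (simp only: P5_def)
    then obtain s where s: "0 \<le> s" "s \<le> 1" "C + s *\<^sub>R (F3 - C) \<in> open_triangle A F1 B" by (elim exE conjE)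
    from tri_ex[OF s(3)] obtain a b c where abc: "C + s *\<^sub>R (F3 - C) = a *\<^sub>R A + b *\<^sub>R F1 + c *\<^sub>R B" "a>0" "b>0" "c>0" "a+b+c=1"
      by (elim exE conjE)
    have "\<exists>t. 0 \<le> t \<and> t \<le> 1 \<and> F1 + t *\<^sub>R (B - F1) \<in> open_triangle C F3 A" using that(2) by (simp only: P2_def)
    then obtain t where t: "0 \<le> t" "t \<le> 1" "F1 + t *\<^sub>R (B - F1) \<in> open_triangle C F3 A" by (elim exE conjE)
    from tri_ex[OF t(3)] obtain a2 b2 c2 where abc2: "F1 + t *\<^sub>R (B - F1) = a2 *\<^sub>R C + b2 *\<^sub>R F3 + c2 *\<^sub>R A" "a2>0" "b2>0" "c2>0" "a2+b2+c2=1"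
      by (elim exE conjE)
    have x1: "C + s *\<^sub>R (F3 - C) = c *\<^sub>R B + a *\<^sub>R A + b *\<^sub>R F1" using abc(1) by (simp add: add_ac)
    have x5: "c + a + b = 1" using abc(5) by simp
    have x6: "C + s *\<^sub>R (F3 - C) = (1 - s) *\<^sub>R C + s *\<^sub>R F3" by (simp add: algebra_simps)
    have x7: "0 \<le> s" "s \<le> 1" using s by simp_all
    have y1: "F1 + t *\<^sub>R (B - F1) = (1-(1-t)) *\<^sub>R B + (1-t) *\<^sub>R F1" by (simp add: algebra_simps)
    have y2: "F1 + t *\<^sub>R (B - F1) = c2 *\<^sub>R A + a2 *\<^sub>R C + b2 *\<^sub>R F3" using abc2(1) by (simp add: add_ac)
    have y5: "c2 + a2 + b2 = 1" using abc2(5) by simp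
    show False by (rule excl[OF IA x1 abc(4) abc(2) abc(3) x5 x6 x7 y1 y2 abc2(4) abc2(2) abc2(3) y5])
  qed
  have EC: "False" if "P6" "P3" "F2$3 \<noteq> 0"
  proof -
    have "\<exists>s. 0 \<le> s \<and> s \<le> 1 \<and> F3 + s *\<^sub>R (A - F3) \<in> open_triangle B F2 C" using that(1) by (simp only: P6_def)
    then obtain s where s: "0 \<le> s" "s \<le> 1" "F3 + s *\<^sub>R (A - F3) \<in> open_triangle B F2 C" by (elim exE conjE)
    from tri_ex[OF s(3)] obtain a b c where abc: "F3 + s *\<^sub>R (A - F3) = a *\<^sub>R B + b *\<^sub>R F2 + c *\<^sub>R C" "a>0" "b>0" "c>0" "a+b+c=1"
      by (elim exE conjE)
    have "\<exists>t. 0 \<le> t \<and> t \<le> 1 \<and> B + t *\<^sub>R (F2 - B) \<in> open_triangle C F3 A" using that(2) by (simp only: P3_def)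
    then obtain t where t: "0 \<le> t" "t \<le> 1" "B + t *\<^sub>R (F2 - B) \<in> open_triangle C F3 A" by (elim exE conjE)
    from tri_ex[OF t(3)] obtain a2 b2 c2 where abc2: "B + t *\<^sub>R (F2 - B) = a2 *\<^sub>R C + b2 *\<^sub>R F3 + c2 *\<^sub>R A" "a2>0" "b2>0" "c2>0" "a2+b2+c2=1"
      by (elim exE conjE)
    have x1: "F3 + s *\<^sub>R (A - F3) = a *\<^sub>R B + c *\<^sub>R C + b *\<^sub>R F2" using abc(1) by (simp add: add_ac)
    have x5: "a + c + b = 1" using abc(5) by simp
    have x6: "F3 + s *\<^sub>R (A - F3) = (1 - (1-s)) *\<^sub>R A + (1-s) *\<^sub>R F3" by (simp add: algebra_simps)
    have x7: "0 \<le> 1 - s" "1 - s \<le> 1" using s by simp_all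
    have y1: "B + t *\<^sub>R (F2 - B) = (1-t) *\<^sub>R B + t *\<^sub>R F2" by (simp add: algebra_simps)
    have y2: "B + t *\<^sub>R (F2 - B) = a2 *\<^sub>R C + c2 *\<^sub>R A + b2 *\<^sub>R F3" using abc2(1) by (simp add: add_ac)
    have y5: "a2 + c2 + b2 = 1" using abc2(5) by simp
    show False by (rule excl[OF IC[OF that(3)] x1 abc(2) abc(4) abc(3) x5 x6 x7 y1 y2 abc2(2) abc2(4) abc2(3) y5])
  qed
  have DB: "(A-B)$2*(C-B)$1 - (A-B)$1*(C-B)$2 > 0" using A3 B C by simp
  have DC: "(B-C)$2*(A-C)$1 - (B-C)$1*(A-C)$2 > 0"
  proof -
    have "(B-C)$2*(A-C)$1 - (B-C)$1*(A-C)$2 = B$1 * C$2" using A3 B C by (simp add: algebra_simps)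
    then show ?thesis using B C by simp
  qed
  have DA: "(C-A)$2*(B-A)$1 - (C-A)$1*(B-A)$2 > 0" using A3 B C by simp
  have zs: "V$3 = 0" if "V = A \<or> V = B \<or> V = C" for V using that A3 B C by auto
  have PB4: "sin th1 * cos th2 + cos th1 * sin th2 > 0" if "P4" "sin th1 > 0" "sin th2 > 0"
  proof -
    have "\<exists>s. 0 \<le> s \<and> s \<le> 1 \<and> F2 + s *\<^sub>R (C - F2) \<in> open_triangle A F1 B" using that(1) by (simp only: P4_def)
    then obtain s where s: "0 \<le> s" "s \<le> 1" "F2 + s *\<^sub>R (C - F2) \<in> open_triangle A F1 B" by (elim exE conjE)
    from tri_ex[OF s(3)] obtain a b c where abc: "F2 + s *\<^sub>R (C - F2) = a *\<^sub>R A + b *\<^sub>R F1 + c *\<^sub>R B" "a>0" "b>0" "c>0" "a+b+c=1"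
      by (elim exE conjE)
    have X1: "F2 + s *\<^sub>R (C - F2) - B = a *\<^sub>R (A - B) + b *\<^sub>R (F1 - B)" using tri_Q[OF abc(1) abc(5)] .
    have X2: "F2 + s *\<^sub>R (C - F2) - B = s *\<^sub>R (C - B) + (1-s) *\<^sub>R (F2 - B)" by (simp add: algebra_simps)
    have pp: "a \<ge> 0" "b \<ge> 0" "s \<ge> 0" "(1-s) \<ge> 0" "a + b > 0" "s + (1-s) > 0" "b + (1-s) > 0"
      using s abc by auto
    show ?thesis
      by (rule pair_vec[OF B(3) A3(1) C(1) DB conjunct2[OF conjunct2[OF th1]] u1_def conjunct2[OF conjunct2[OF th2]] u2_def
          hp(1) hp(2) that(2) that(3) X1 X2 pp])
  qed
  have PB1: "sin th1 * cos th2 + cos th1 * sin th2 > 0" if "P1" "sin th1 > 0" "sin th2 > 0"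
  proof -
    have "\<exists>s. 0 \<le> s \<and> s \<le> 1 \<and> A + s *\<^sub>R (F1 - A) \<in> open_triangle B F2 C" using that(1) by (simp only: P1_def)
    then obtain s where s: "0 \<le> s" "s \<le> 1" "A + s *\<^sub>R (F1 - A) \<in> open_triangle B F2 C" by (elim exE conjE)
    from tri_ex[OF s(3)] obtain a b c where abc: "A + s *\<^sub>R (F1 - A) = a *\<^sub>R B + b *\<^sub>R F2 + c *\<^sub>R C" "a>0" "b>0" "c>0" "a+b+c=1"
      by (elim exE conjE)
    have X1: "A + s *\<^sub>R (F1 - A) - B = (1-s) *\<^sub>R (A - B) + s *\<^sub>R (F1 - B)" by (simp add: algebra_simps)
    have X2: "A + s *\<^sub>R (F1 - A) - B = c *\<^sub>R (C - B) + b *\<^sub>R (F2 - B)" using tri_P[OF abc(1) abc(5)] .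
    have pp: "(1-s) \<ge> 0" "s \<ge> 0" "c \<ge> 0" "b \<ge> 0" "(1-s) + s > 0" "c + b > 0" "s + b > 0"
      using s abc by auto
    show ?thesis
      by (rule pair_vec[OF B(3) A3(1) C(1) DB conjunct2[OF conjunct2[OF th1]] u1_def conjunct2[OF conjunct2[OF th2]] u2_def
          hp(1) hp(2) that(2) that(3) X1 X2 pp])
  qed
  have PC6: "sin th2 * cos th3 + cos th2 * sin th3 > 0" if "P6" "sin th2 > 0" "sin th3 > 0"
  proof -
    have "\<exists>s. 0 \<le> s \<and> s \<le> 1 \<and> F3 + s *\<^sub>R (A - F3) \<in> open_triangle B F2 C" using that(1) by (simp only: P6_def)
    then obtain s where s: "0 \<le> s" "s \<le> 1" "F3 + s *\<^sub>R (A - F3) \<in> open_triangle B F2 C" by (elim exE conjE)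
    from tri_ex[OF s(3)] obtain a b c where abc: "F3 + s *\<^sub>R (A - F3) = a *\<^sub>R B + b *\<^sub>R F2 + c *\<^sub>R C" "a>0" "b>0" "c>0" "a+b+c=1"
      by (elim exE conjE)
    have X1: "F3 + s *\<^sub>R (A - F3) - C = a *\<^sub>R (B - C) + b *\<^sub>R (F2 - C)" using tri_Q[OF abc(1) abc(5)] .
    have X2: "F3 + s *\<^sub>R (A - F3) - C = s *\<^sub>R (A - C) + (1-s) *\<^sub>R (F3 - C)" by (simp add: algebra_simps)
    have pp: "a \<ge> 0" "b \<ge> 0" "s \<ge> 0" "(1-s) \<ge> 0" "a + b > 0" "s + (1-s) > 0" "b + (1-s) > 0"
      using s abc by auto
    show ?thesis
      by (rule pair_vec[OF C(1) B(3) A3(1) DC conjunct2[OF conjunct2[OF th2]] u2_def conjunct2[OF conjunct2[OF th3]] u3_def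
          hp(2) hp(3) that(2) that(3) X1 X2 pp])
  qed
  have PC3: "sin th2 * cos th3 + cos th2 * sin th3 > 0" if "P3" "sin th2 > 0" "sin th3 > 0"
  proof -
    have "\<exists>s. 0 \<le> s \<and> s \<le> 1 \<and> B + s *\<^sub>R (F2 - B) \<in> open_triangle C F3 A" using that(1) by (simp only: P3_def)
    then obtain s where s: "0 \<le> s" "s \<le> 1" "B + s *\<^sub>R (F2 - B) \<in> open_triangle C F3 A" by (elim exE conjE)
    from tri_ex[OF s(3)] obtain a b c where abc: "B + s *\<^sub>R (F2 - B) = a *\<^sub>R C + b *\<^sub>R F3 + c *\<^sub>R A" "a>0" "b>0" "c>0" "a+b+c=1"
      by (elim exE conjE)
    have X1: "B + s *\<^sub>R (F2 - B) - C = (1-s) *\<^sub>R (B - C) + s *\<^sub>R (F2 - C)" by (simp add: algebra_simps)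
    have X2: "B + s *\<^sub>R (F2 - B) - C = c *\<^sub>R (A - C) + b *\<^sub>R (F3 - C)" using tri_P[OF abc(1) abc(5)] .
    have pp: "(1-s) \<ge> 0" "s \<ge> 0" "c \<ge> 0" "b \<ge> 0" "(1-s) + s > 0" "c + b > 0" "s + b > 0"
      using s abc by auto
    show ?thesis
      by (rule pair_vec[OF C(1) B(3) A3(1) DC conjunct2[OF conjunct2[OF th2]] u2_def conjunct2[OF conjunct2[OF th3]] u3_def
          hp(2) hp(3) that(2) that(3) X1 X2 pp])
  qed
  have PA5: "sin th3 * cos th1 + cos th3 * sin th1 > 0" if "P5" "sin th3 > 0" "sin th1 > 0"
  proof -
    have "\<exists>s. 0 \<le> s \<and> s \<le> 1 \<and> C + s *\<^sub>R (F3 - C) \<in> open_triangle A F1 B" using that(1) by (simp only: P5_def)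
    then obtain s where s: "0 \<le> s" "s \<le> 1" "C + s *\<^sub>R (F3 - C) \<in> open_triangle A F1 B" by (elim exE conjE)
    from tri_ex[OF s(3)] obtain a b c where abc: "C + s *\<^sub>R (F3 - C) = a *\<^sub>R A + b *\<^sub>R F1 + c *\<^sub>R B" "a>0" "b>0" "c>0" "a+b+c=1"
      by (elim exE conjE)
    have X1: "C + s *\<^sub>R (F3 - C) - A = (1-s) *\<^sub>R (C - A) + s *\<^sub>R (F3 - A)" by (simp add: algebra_simps)
    have X2: "C + s *\<^sub>R (F3 - C) - A = c *\<^sub>R (B - A) + b *\<^sub>R (F1 - A)" using tri_P[OF abc(1) abc(5)] .
    have pp: "(1-s) \<ge> 0" "s \<ge> 0" "c \<ge> 0" "b \<ge> 0" "(1-s) + s > 0" "c + b > 0" "s + b > 0"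
      using s abc by auto
    show ?thesis
      by (rule pair_vec[OF A3(1) C(1) B(3) DA conjunct2[OF conjunct2[OF th3]] u3_def conjunct2[OF conjunct2[OF th1]] u1_def
          hp(3) hp(1) that(2) that(3) X1 X2 pp])
  qed
  have PA2: "sin th3 * cos th1 + cos th3 * sin th1 > 0" if "P2" "sin th3 > 0" "sin th1 > 0"
  proof -
    have "\<exists>s. 0 \<le> s \<and> s \<le> 1 \<and> F1 + s *\<^sub>R (B - F1) \<in> open_triangle C F3 A" using that(1) by (simp only: P2_def)
    then obtain s where s: "0 \<le> s" "s \<le> 1" "F1 + s *\<^sub>R (B - F1) \<in> open_triangle C F3 A" by (elim exE conjE)
    from tri_ex[OF s(3)] obtain a b c where abc: "F1 + s *\<^sub>R (B - F1) = a *\<^sub>R C + b *\<^sub>R F3 + c *\<^sub>R A" "a>0" "b>0" "c>0" "a+b+c=1"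
      by (elim exE conjE)
    have X1: "F1 + s *\<^sub>R (B - F1) - A = a *\<^sub>R (C - A) + b *\<^sub>R (F3 - A)" using tri_Q[OF abc(1) abc(5)] .
    have X2: "F1 + s *\<^sub>R (B - F1) - A = s *\<^sub>R (B - A) + (1-s) *\<^sub>R (F1 - A)" by (simp add: algebra_simps)
    have pp: "a \<ge> 0" "b \<ge> 0" "s \<ge> 0" "(1-s) \<ge> 0" "a + b > 0" "s + (1-s) > 0" "b + (1-s) > 0"
      using s abc by auto
    show ?thesis
      by (rule pair_vec[OF A3(1) C(1) B(3) DA conjunct2[OF conjunct2[OF th3]] u3_def conjunct2[OF conjunct2[OF th1]] u1_def
          hp(3) hp(1) that(2) that(3) X1 X2 pp])
  qed
  have sin2: "sin th2 > 0" if "F2$3 > 0" using that z123(2) hp(2) by (metis zero_less_mult_pos)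
  have sin3: "sin th3 > 0" if "F3$3 > 0" using that z123(3) hp(3) by (metis zero_less_mult_pos)
  have all: "sin th2 > 0 \<and> sin th3 > 0 \<and> sin th1 * cos th2 + cos th1 * sin th2 > 0
      \<and> sin th2 * cos th3 + cos th2 * sin th3 > 0 \<and> sin th3 * cos th1 + cos th3 * sin th1 > 0"
  proof (cases P4)
    case True
    have z2: "F2$3 > 0" using S4[OF True] .
    have "\<not> P1" using EB True by blast
    then have "P6" using P61 by blast
    have z3: "F3$3 > 0" using S6[OF \<open>P6\<close> z2] .
    have "\<not> P3" using EC[OF \<open>P6\<close> _] z2 by auto
    then have "P2" using P23 by blast
    show ?thesis using sin1 sin2[OF z2] sin3[OF z3] PB4[OF True sin1 sin2[OF z2]]
      PC6[OF \<open>P6\<close> sin2[OF z2] sin3[OF z3]] PA2[OF \<open>P2\<close> sin3[OF z3] sin1] by blast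
  next
    case False
    then have "P5" using P45 by blast
    have z3: "F3$3 > 0" using S5[OF \<open>P5\<close>] .
    have "\<not> P2" using EA \<open>P5\<close> by blast
    then have "P3" using P23 by blast
    have z2: "F2$3 > 0" using S3[OF \<open>P3\<close> z3] .
    have "\<not> P6" using EC[OF _ \<open>P3\<close>] z2 by auto
    then have "P1" using P61 by blast
    show ?thesis using sin1 sin2[OF z2] sin3[OF z3] PB1[OF \<open>P1\<close> sin1 sin2[OF z2]]
      PC3[OF \<open>P3\<close> sin2[OF z2] sin3[OF z3]] PA5[OF \<open>P5\<close> sin3[OF z3] sin1] by blast
  qed
  have r1: "0 < th1 \<and> th1 < pi" using sin_range th1 sin1 by blast
  have r2: "0 < th2 \<and> th2 < pi" using sin_range th2 all by blast
  have r3: "0 < th3 \<and> th3 < pi" using sin_range th3 all by blast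
  have s12: "th1 + th2 < pi" using sum_range r1 r2 all by blast
  have s23: "th2 + th3 < pi" using sum_range r2 r3 all by blast
  have s13: "th1 + th3 < pi"
  proof -
    have "sin th1 * cos th3 + cos th1 * sin th3 > 0" using all by (simp add: algebra_simps)
    then show ?thesis using sum_range r1 r3 by blast
  qed
  have "(\<forall>i\<in>{1,2,3}. 0 < aa_theta w i \<and> aa_theta w i < pi)"
    using r1 r2 r3 unfolding th1_def th2_def th3_def by simp
  then show ?thesis using s12 s13 s23 unfolding th1_def th2_def th3_def w_def by simp
qed

end
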